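(* Let $n\geq 2$ and let $P$ be a set of $n$ points equally spaced on a circle. There is a tree spanner on $P$ with dilation at most $\frac{2n}{\pi}+\frac{\pi}{2n}$.
   Context: A tree spanner on $P$ is a spanning tree on vertex set $P$ whose edges are weighted by the Euclidean distance between their endpoints. Its dilation is $\max\{ d_G(p,p')/|pp'| : p\neq p'\in P\}$, where $d_G$ is the shortest-path distance in the tree and $|pp'|$ the Euclidean distance. *)

theory Defs
  imports "HOL-Analysis.Analysis"
begin

text \<open>Points of the plane are complex numbers; the Euclidean distance is dist.
  A graph on vertex set P is given by a set E of undirected edges, each a
  two-element subset of P.\<close>

definition is_graph_on :: "complex set \<Rightarrow> complex set set \<Rightarrow> bool" where
  "is_graph_on P E \<longleftrightarrow> (\<forall>e\<in>E. \<exists>u v. u \<in> P \<and> v \<in> P \<and> u \<noteq> v \<and> e = {u, v})"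

definition is_walk :: "complex set set \<Rightarrow> complex list \<Rightarrow> bool" where
  "is_walk E xs \<longleftrightarrow> xs \<noteq> [] \<and> (\<forall>i. Suc i < length xs \<longrightarrow> {xs ! i, xs ! Suc i} \<in> E)"

definition walk_length :: "complex list \<Rightarrow> real" where
  "walk_length xs = (\<Sum>i<length xs - 1. dist (xs ! i) (xs ! Suc i))"

definition connected_graph :: "complex set \<Rightarrow> complex set set \<Rightarrow> bool" where
  "connected_graph P E \<longleftrightarrow>
     (\<forall>p\<in>P. \<forall>q\<in>P. \<exists>xs. is_walk E xs \<and> hd xs = p \<and> last xs = q)"

definition is_cycle :: "complex set set \<Rightarrow> complex list \<Rightarrow> bool" where
  "is_cycle E xs \<longleftrightarrow> length xs \<ge> 3 \<and> distinct xs \<and> is_walk E xs \<and> {last xs, hd xs} \<in> E"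

definition spanning_tree :: "complex set \<Rightarrow> complex set set \<Rightarrow> bool" where
  "spanning_tree P E \<longleftrightarrow> is_graph_on P E \<and> connected_graph P E \<and> (\<nexists>xs. is_cycle E xs)"

definition graph_dist :: "complex set set \<Rightarrow> complex \<Rightarrow> complex \<Rightarrow> real" where
  "graph_dist E p q = Inf {walk_length xs | xs. is_walk E xs \<and> hd xs = p \<and> last xs = q}"

definition dilation :: "complex set \<Rightarrow> complex set set \<Rightarrow> real" where
  "dilation P E = Max {graph_dist E p q / dist p q | p q. p \<in> P \<and> q \<in> P \<and> p \<noteq> q}"

definition equally_spaced :: "nat \<Rightarrow> complex \<Rightarrow> real \<Rightarrow> real \<Rightarrow> complex set" where
  "equally_spaced n c r \<theta> = {c + of_real r * cis (\<theta> + 2 * pi * real k / real n) | k. k < n}"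

end

theory Submission
  imports Defs
begin


lemma tanbound:
  fixes x :: real assumes "0 < x" "x \<le> pi/4"
  shows "1 / (sin x * cos x) \<le> 1/x + x"
proof -
  have xl: "x < pi/2" using assms pi_gt_zero by linarith
  have c: "cos x > 0" using assms xl by (intro cos_gt_zero) auto
  have s: "sin x > 0" using assms xl by (intro sin_gt_zero) auto
  define t where "t = tan x"
  have "\<bar>x\<bar> \<le> \<bar>tan x\<bar>" using abs_tan_ge[of x] assms xl by simp
  hence xt: "x \<le> t" using assms s c by (simp add: t_def tan_def)
  have "tan x \<le> tan (pi/4)" using assms xl by (intro tan_mono_le) auto
  hence t1: "t \<le> 1" by (simp add: t_def tan_45)
  have eq: "1 / (sin x * cos x) = t + 1/t"
    using s c sin_cos_squared_add[of x]
    by (simp add: t_def tan_def field_simps power2_eq_square)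
  have "t + 1/t \<le> x + 1/x"
  proof -
    have "(t - x) * (1 - x*t) \<ge> 0" using xt t1 assms
      by (intro mult_nonneg_nonneg) (auto intro!: mult_le_one)
    hence "(t - x) * (1 - x*t) / (x*t) \<ge> 0" using assms xt by simp
    moreover have "(t - x) * (1 - x*t) / (x*t) = (x + 1/x) - (t + 1/t)"
      using assms xt by (simp add: field_simps)
    ultimately show ?thesis by linarith
  qed
  thus ?thesis using eq by simp
qed

lemma cis_diff_sq: "(cmod (cis a - cis b))^2 = 2 - 2 * cos (a - b)"
proof -
  have "(cmod (cis a - cis b))^2 = (cos a - cos b)^2 + (sin a - sin b)^2" by (simp add: cmod_power2)
  also have "\<dots> = (sin a ^2 + cos a ^2) + (sin b^2 + cos b^2) - 2 * (cos a * cos b + sin a * sin b)"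
    by (simp add: power2_diff algebra_simps)
  also have "\<dots> = 2 - 2 * cos (a - b)" by (simp add: cos_diff)
  finally show ?thesis .
qed

lemma cos_step:
  fixes n d :: nat assumes "1 \<le> d" "d < n"
  shows "cos (2*pi*real d/real n) \<le> cos (2*pi/real n)"
proof (cases "2*d \<le> n")
  case True
  show ?thesis
  proof (rule cos_monotone_0_pi_le)
    show "0 \<le> 2*pi/real n" by simp
    show "2*pi/real n \<le> 2*pi*real d/real n" using assms
      by (intro divide_right_mono) auto
    have "2*pi*real d/real n = pi * (2*real d/real n)" by simp
    also have "\<dots> \<le> pi * 1" using True assms
      by (intro mult_left_mono) (auto simp: field_simps)
    finally show "2*pi*real d/real n \<le> pi" by simp
  qed
next
  case False
  have "cos (2*pi*real d/real n) = cos (2*pi - 2*pi*real d/real n)"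
    by (simp add: cos_diff)
  also have "2*pi - 2*pi*real d/real n = 2*pi*real (n-d)/real n"
    using assms by (simp add: field_simps of_nat_diff)
  also have "cos (2*pi*real (n-d)/real n) \<le> cos (2*pi/real n)"
  proof (rule cos_monotone_0_pi_le)
    show "0 \<le> 2*pi/real n" by simp
    show "2*pi/real n \<le> 2*pi*real (n-d)/real n" using assms
      by (intro divide_right_mono) auto
    have "2*pi*real (n-d)/real n = pi * (2*real (n-d)/real n)" by simp
    also have "\<dots> \<le> pi * 1" using False assms
      by (intro mult_left_mono) (auto simp: field_simps of_nat_diff)
    finally show "2*pi*real (n-d)/real n \<le> pi" by simp
  qed
  finally show ?thesis .
qed



lemma chord:
  fixes n i j :: nat assumes "i < n" "j < n" "i \<noteq> j" "r > 0"
  shows "2 * r * sin (pi / real n) \<le>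
    dist (c + of_real r * cis (\<theta> + 2*pi*real i/real n)) (c + of_real r * cis (\<theta> + 2*pi*real j/real n))"
proof -
  define a where "a = \<theta> + 2*pi*real i/real n"
  define b where "b = \<theta> + 2*pi*real j/real n"
  have n0: "n > 0" using assms by auto
  have "dist (c + of_real r * cis a) (c + of_real r * cis b) = cmod (of_real r * (cis a - cis b))"
    by (simp add: dist_norm algebra_simps)
  also have "\<dots> = r * cmod (cis a - cis b)" using assms by (simp add: norm_mult)
  finally have D: "dist (c + of_real r * cis a) (c + of_real r * cis b) = r * cmod (cis a - cis b)" .
  obtain d where d: "1 \<le> d" "d < n" "cos (a - b) = cos (2*pi*real d/real n)"
  proof (cases "j < i")
    case True
    have "a - b = 2*pi*(real i - real j)/real n" unfolding a_def b_def using n0 by (simp add: field_simps)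
    also have "real i - real j = real (i-j)" using True by (simp add: of_nat_diff)
    finally have "a - b = 2*pi*real (i-j)/real n" .
    thus ?thesis using that[of "i-j"] True assms by auto
  next
    case False
    have "a - b = - (2*pi*(real j - real i)/real n)" unfolding a_def b_def using n0 by (simp add: field_simps)
    also have "real j - real i = real (j-i)" using False by (simp add: of_nat_diff)
    finally have "a - b = - (2*pi*real (j-i)/real n)" .
    hence "cos (a - b) = cos (2*pi*real (j-i)/real n)" by (simp only: cos_minus)
    thus ?thesis using that[of "j-i"] False assms by auto
  qed
  have "cos (a - b) \<le> cos (2*pi/real n)" using d cos_step[of d n] by simp
  moreover have "cos (2*pi/real n) = 1 - 2 * sin (pi/real n) ^ 2"
    using cos_double_sin[of "pi/real n"] by simp
  ultimately have sq: "(2 * sin (pi/real n))^2 \<le> (cmod (cis a - cis b))^2"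
    by (simp add: cis_diff_sq power_mult_distrib)
  moreover have "sin (pi/real n) \<ge> 0" using n0
    by (intro sin_ge_zero) (auto simp: field_simps)
  have "2 * sin (pi/real n) \<le> cmod (cis a - cis b)"
    by (rule power2_le_imp_le[OF sq norm_ge_zero])
  hence "r * (2 * sin (pi/real n)) \<le> r * cmod (cis a - cis b)" using assms(4) by (rule mult_left_mono[OF _ less_imp_le])
  hence "2 * r * sin (pi / real n) \<le> dist (c + of_real r * cis a) (c + of_real r * cis b)" unfolding D by (simp add: mult.assoc)
  thus ?thesis unfolding a_def b_def .
qed


lemma graph_dist_le:
  assumes "is_walk E xs" "hd xs = p" "last xs = q"
  shows "graph_dist E p q \<le> walk_length xs"
  unfolding graph_dist_def
proof (rule cInf_lower)
  show "walk_length xs \<in> {walk_length xs |xs. is_walk E xs \<and> hd xs = p \<and> last xs = q}"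
    using assms by blast
  show "bdd_below {walk_length xs |xs. is_walk E xs \<and> hd xs = p \<and> last xs = q}"
    unfolding bdd_below_def walk_length_def by (auto intro!: exI[of _ 0] sum_nonneg)
qed

lemma walk1: "is_walk E [a]"
  by (simp add: is_walk_def)

lemma walk2: "{a, b} \<in> E \<Longrightarrow> is_walk E [a, b]"
  by (auto simp: is_walk_def)

lemma walk3: "{a, b} \<in> E \<Longrightarrow> {b, d} \<in> E \<Longrightarrow> is_walk E [a, b, d]"
  unfolding is_walk_def
proof (intro conjI allI impI)
  fix i assume "{a, b} \<in> E" "{b, d} \<in> E" "Suc i < length [a, b, d]"
  thus "{[a, b, d] ! i, [a, b, d] ! Suc i} \<in> E"
    by (cases i) (auto simp: less_Suc_eq)
qed simp

lemma wl2: "walk_length [a, b] = dist a b"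
  by (simp add: walk_length_def)

lemma wl3: "walk_length [a, b, d] = dist a b + dist b d"
  by (simp add: walk_length_def numeral_3_eq_3 lessThan_Suc)

lemma dist_pt: "dist (c + of_real r * cis t) c = r" if "r > 0" for r :: real
  using that by (simp add: dist_norm norm_mult)

theorem lemma25:
  fixes n :: nat and c :: complex and r :: real and \<theta> :: real and P :: "complex set"
  assumes "n \<ge> 2" and "r > 0" and "P = equally_spaced n c r \<theta>"
  shows "\<exists>E. spanning_tree P E \<and> dilation P E \<le> 2 * real n / pi + pi / (2 * real n)"
proof -
  define pt where "pt k = c + of_real r * cis (\<theta> + 2*pi*real k/real n)" for k
  have P: "P = pt ` {..<n}" using assms(3) by (auto simp: equally_spaced_def pt_def)
  define p0 where "p0 = pt 0"
  have p0P: "p0 \<in> P" using P assms(1) by (auto simp: p0_def)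
  define E where "E = {{p0, q} | q. q \<in> P \<and> q \<noteq> p0}"
  have inE: "p0 = a \<or> p0 = b" if "{a, b} \<in> E" for a b
    using that unfolding E_def by (auto simp: doubleton_eq_iff)
  have edge1: "{p0, q} \<in> E" if "q \<in> P" "q \<noteq> p0" for q
    using that unfolding E_def by blast
  have edge2: "{q, p0} \<in> E" if "q \<in> P" "q \<noteq> p0" for q
    using edge1[OF that] by (simp add: insert_commute)
  have graph: "is_graph_on P E"
    unfolding is_graph_on_def E_def using p0P by blast
  have conn: "connected_graph P E"
    unfolding connected_graph_def
  proof (intro ballI)
    fix p q assume pq: "p \<in> P" "q \<in> P"
    show "\<exists>xs. is_walk E xs \<and> hd xs = p \<and> last xs = q"
    proof (cases "p = q")
      case True thus ?thesis using walk1[of E p] by (intro exI[of _ "[p]"]) auto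
    next
      case False
      show ?thesis
      proof (cases "p = p0")
        case True thus ?thesis using walk2[OF edge1[of q]] pq False
          by (intro exI[of _ "[p0, q]"]) auto
      next
        case F2: False
        show ?thesis
        proof (cases "q = p0")
          case True thus ?thesis using walk2[OF edge2[of p]] pq F2
            by (intro exI[of _ "[p, p0]"]) auto
        next
          case False thus ?thesis using walk3[OF edge2[of p] edge1[of q]] pq F2
            by (intro exI[of _ "[p, p0, q]"]) auto
        qed
      qed
    qed
  qed
  have nocyc: "\<nexists>xs. is_cycle E xs"
  proof
    assume "\<exists>xs. is_cycle E xs"
    then obtain xs where cy: "is_cycle E xs" by blast
    define m where "m = length xs"
    have m3: "m \<ge> 3" and dis: "distinct xs" and w: "is_walk E xs" and cl: "{last xs, hd xs} \<in> E"
      using cy by (auto simp: is_cycle_def m_def)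
    have e01: "{xs!0, xs!1} \<in> E" using w m3 by (auto simp: is_walk_def m_def)
    have e12: "{xs!1, xs!2} \<in> E" using w m3 by (auto simp: is_walk_def m_def numeral_2_eq_2)
    have ne: "xs ! i \<noteq> xs ! j" if "i < m" "j < m" "i \<noteq> j" for i j
      using dis that by (simp add: nth_eq_iff_index_eq m_def)
    have "p0 = xs ! 1"
      using inE[OF e01] inE[OF e12] ne[of 0 2] m3 by auto
    moreover have "last xs = xs ! (m - 1)" "hd xs = xs ! 0"
    proof -
      have "xs \<noteq> []" using m3 unfolding m_def by auto
      thus "last xs = xs ! (m - 1)" "hd xs = xs ! 0"
        by (simp_all add: m_def last_conv_nth hd_conv_nth)
    qed
    moreover have "xs ! (m - 1) \<noteq> xs ! 1" using m3 by (intro ne) auto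
    moreover have "xs ! 0 \<noteq> xs ! 1" using m3 by (intro ne) auto
    ultimately show False
      using inE[OF cl] by auto
  qed
  have tree: "spanning_tree P E" using graph conn nocyc by (simp add: spanning_tree_def)
  have n0: "n > 0" using assms(1) by simp
  define s where "s = sin (pi / real n)"
  have s0: "s > 0" unfolding s_def using assms(1)
    by (intro sin_gt_zero) (auto simp: field_simps)
  have chordP: "2 * r * s \<le> dist p q" if pqP: "p \<in> P" "q \<in> P" "p \<noteq> q" for p q
  proof -
    obtain i j where ij: "i < n" "j < n" "p = pt i" "q = pt j" using pqP(1,2) P by blast
    hence "i \<noteq> j" using pqP by auto
    thus ?thesis using chord[of i n j r c \<theta>] ij assms(2) by (simp add: pt_def s_def)
  qed
  have rad: "dist p c = r" if "p \<in> P" for p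
    using that P assms(2) by (auto simp: pt_def dist_pt)
  define x where "x = pi / (2 * real n)"
  have x0: "0 < x" "x \<le> pi/4" using assms(1) by (auto simp: x_def field_simps)
  have sx: "s = 2 * sin x * cos x"
    unfolding s_def x_def using sin_double[of "pi / (2 * real n)"] by simp
  have key: "2 / s \<le> 2 * real n / pi + pi / (2 * real n)"
  proof -
    have "2 / s = 1 / (sin x * cos x)" using sx by simp
    also have "\<dots> \<le> 1/x + x" by (rule tanbound[OF x0])
    also have "1/x + x = 2 * real n / pi + pi / (2 * real n)" by (simp add: x_def)
    finally show ?thesis .
  qed
  define S where "S = {graph_dist E p q / dist p q | p q. p \<in> P \<and> q \<in> P \<and> p \<noteq> q}"
  have finP: "finite P" using P by simp
  have finS: "finite S"
  proof (rule finite_subset)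
    show "S \<subseteq> (\<lambda>(p, q). graph_dist E p q / dist p q) ` (P \<times> P)" unfolding S_def by auto
    show "finite ((\<lambda>(p, q). graph_dist E p q / dist p q) ` (P \<times> P))" using finP by simp
  qed
  have p1: "pt 1 \<in> P" using P assms(1) by auto
  have "p0 \<noteq> pt 1"
  proof
    assume "p0 = pt 1"
    moreover have "2 * r * s \<le> dist p0 (pt 1)"
      using chord[of 0 n 1 r c \<theta>] assms by (simp add: pt_def s_def p0_def)
    ultimately show False using mult_pos_pos[OF assms(2) s0] by simp
  qed
  hence Sne: "S \<noteq> {}" unfolding S_def using p0P p1 by blast
  have bound: "t \<le> 2 * real n / pi + pi / (2 * real n)" if tS: "t \<in> S" for t
  proof -
    obtain p q where pq: "p \<in> P" "q \<in> P" "p \<noteq> q" "t = graph_dist E p q / dist p q"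
      using tS unfolding S_def by blast
    have gd: "graph_dist E p q \<le> dist p p0 + dist p0 q"
    proof (cases "p = p0")
      case True
      thus ?thesis using graph_dist_le[OF walk2[OF edge1[of q]]] pq by (simp add: wl2)
    next
      case F: False
      show ?thesis
      proof (cases "q = p0")
        case True
        thus ?thesis using graph_dist_le[OF walk2[OF edge2[of p]]] pq F by (simp add: wl2)
      next
        case False
        thus ?thesis using graph_dist_le[OF walk3[OF edge2[of p] edge1[of q]]] pq F by (simp add: wl3)
      qed
    qed
    have "dist p p0 \<le> dist p c + dist p0 c" by (metis dist_commute dist_triangle)
    moreover have "dist p0 q \<le> dist q c + dist p0 c" by (metis dist_commute dist_triangle3)
    ultimately have gd4: "graph_dist E p q \<le> 4 * r" using gd rad pq p0P by simp
    have dpos: "2 * r * s \<le> dist p q" using chordP pq by blast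
    have rs: "0 < 2 * r * s" using s0 assms(2) by simp
    have "t \<le> 4 * r / (2 * r * s)"
      unfolding pq(4)
    proof (rule frac_le)
      show "0 \<le> 4 * r" using assms(2) by simp
    qed (use gd4 rs dpos in auto)
    also have "4 * r / (2 * r * s) = 2 / s" using assms(2) by simp
    finally show ?thesis using key by simp
  qed
  have "dilation P E \<le> 2 * real n / pi + pi / (2 * real n)"
    unfolding dilation_def S_def[symmetric] using finS Sne bound by (simp add: Max_le_iff)
  thus ?thesis using tree by blast
qed

end
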